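(* Let $(X,f,\mu)$ and $(Y,g,\nu)$ be ergodic probability measure preserving dynamical systems on relatively compact metric spaces $X$ and $Y$, with $g$ invertible, and let $h\colon X\to\mathbb Z$ be measurable with $\int_X h\,d\mu=0$. Let $F(x,y)=(f(x),g^{h(x)}(y))$ on $Z=X\times Y$, endowed with the sup metric $d$. Then for $\mu$-a.e. $x\in X$ and every $y\in Y$, \[ \limsup_{r\to0}\frac{\log\tau_r^F(x,y)}{-\log r}\le \limsup_{r\to0}\frac{\log\tau_r^{\widetilde F}(x)}{-\log r}. \]
   Context: Write $h_n=\sum_{k=0}^{n-1}h\circ f^k$, so that $F^n(x,y)=(f^n(x),g^{h_n(x)}(y))$. The first return time of $F$ is $\tau_r^F(z)=\inf\{n\ge1: d(F^n(z),z)<r\}$ for $z\in Z$, $r>0$. The $\mathbb Z$-extension is $\widetilde F\colon X\times\mathbb Z\to X\times\mathbb Z$, $\widetilde F(x,q)=(f(x),q+h(x))$, and its return time to the $r$-neighbourhood of the starting point (independent of $q$) is $\tau_r^{\widetilde F}(x)=\inf\{n\ge1: d(f^n(x),x)<r,\ h_n(x)=0\}$. *)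

theory Defs
  imports "HOL-Probability.Probability"
begin

definition mp_map :: "'a measure \<Rightarrow> ('a \<Rightarrow> 'a) \<Rightarrow> bool" where
  "mp_map M T \<longleftrightarrow> T \<in> measurable M M \<and> distr M M T = M"

definition ergodic_mp :: "'a measure \<Rightarrow> ('a \<Rightarrow> 'a) \<Rightarrow> bool" where
  "ergodic_mp M T \<longleftrightarrow> mp_map M T \<and>
     (\<forall>A \<in> sets M. T -` A \<inter> space M = A \<longrightarrow> measure M A = 0 \<or> measure M A = 1)"

definition ipow :: "'b set \<Rightarrow> ('b \<Rightarrow> 'b) \<Rightarrow> int \<Rightarrow> 'b \<Rightarrow> 'b" where
  "ipow Y g k = (if 0 \<le> k then g ^^ nat k else inv_into Y g ^^ nat (- k))"

definition hsum :: "('a \<Rightarrow> 'a) \<Rightarrow> ('a \<Rightarrow> int) \<Rightarrow> nat \<Rightarrow> 'a \<Rightarrow> int" where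
  "hsum f h n x = (\<Sum>k<n. h ((f ^^ k) x))"

definition skew :: "'b set \<Rightarrow> ('a \<Rightarrow> 'a) \<Rightarrow> ('b \<Rightarrow> 'b) \<Rightarrow> ('a \<Rightarrow> int) \<Rightarrow> 'a \<times> 'b \<Rightarrow> 'a \<times> 'b" where
  "skew Y f g h = (\<lambda>(x, y). (f x, ipow Y g (h x) y))"

definition supdist :: "'a::metric_space \<times> 'b::metric_space \<Rightarrow> 'a \<times> 'b \<Rightarrow> real" where
  "supdist z w = max (dist (fst z) (fst w)) (dist (snd z) (snd w))"

definition ret_time :: "('c \<Rightarrow> 'c) \<Rightarrow> ('c \<Rightarrow> 'c \<Rightarrow> real) \<Rightarrow> real \<Rightarrow> 'c \<Rightarrow> ereal" where
  "ret_time T d r z =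
     (if \<exists>n::nat. 1 \<le> n \<and> d ((T ^^ n) z) z < r
      then ereal (real (LEAST n::nat. 1 \<le> n \<and> d ((T ^^ n) z) z < r)) else \<infinity>)"

(* return time of the Z-extension: inf {n>=1. d(f^n x, x) < r and h_n(x) = 0} *)
definition ext_ret_time :: "('a::metric_space \<Rightarrow> 'a) \<Rightarrow> ('a \<Rightarrow> int) \<Rightarrow> real \<Rightarrow> 'a \<Rightarrow> ereal" where
  "ext_ret_time f h r x =
     (if \<exists>n::nat. 1 \<le> n \<and> dist ((f ^^ n) x) x < r \<and> hsum f h n x = 0
      then ereal (real (LEAST n::nat. 1 \<le> n \<and> dist ((f ^^ n) x) x < r \<and> hsum f h n x = 0))
      else \<infinity>)"

definition elog :: "ereal \<Rightarrow> ereal" where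
  "elog t = (case t of ereal s \<Rightarrow> ereal (ln s) | PInfty \<Rightarrow> \<infinity> | MInfty \<Rightarrow> -\<infinity>)"

definition upper_rate :: "(real \<Rightarrow> ereal) \<Rightarrow> ereal" where
  "upper_rate tau = Limsup (at_right 0) (\<lambda>r. elog (tau r) / ereal (- ln r))"

end

theory Submission
  imports Defs
begin

lemma gi_facts:
  assumes "bij_betw g Y Y" "y \<in> Y"
  shows "g y \<in> Y" "inv_into Y g y \<in> Y" "g (inv_into Y g y) = y" "inv_into Y g (g y) = y"
  using assms
  by (auto simp: bij_betw_def intro: inv_into_into f_inv_into_f inv_into_f_f)

lemma pow_in:
  assumes "bij_betw g Y Y" "y \<in> Y"
  shows "(g ^^ n) y \<in> Y" "(inv_into Y g ^^ n) y \<in> Y"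
  by (induction n) (auto simp: gi_facts[OF assms(1)] assms(2))

lemma ipow_in:
  assumes "bij_betw g Y Y" "y \<in> Y"
  shows "ipow Y g k y \<in> Y"
  using pow_in[OF assms] by (simp add: ipow_def)

lemma ipow_step:
  assumes "bij_betw g Y Y" "y \<in> Y"
  shows "ipow Y g (k + 1) y = g (ipow Y g k y)"
proof (cases "0 \<le> k")
  case True
  then have "nat (k+1) = Suc (nat k)" by simp
  then show ?thesis using True by (simp add: ipow_def)
next
  case False
  define m where "m = nat (-k-1)"
  have m: "nat (-k) = Suc m" "nat (-(k+1)) = m" using False unfolding m_def by auto
  show ?thesis
  proof (cases "k + 1 = 0")
    case True
    then have "m = 0" using m by simp
    then show ?thesis using False True m
      by (simp add: ipow_def gi_facts[OF assms])
  next
    case c: False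
    then show ?thesis using False m
      by (simp add: ipow_def gi_facts(3)[OF assms(1) pow_in(2)[OF assms]])
  qed
qed

lemma ipow_stepm:
  assumes "bij_betw g Y Y" "y \<in> Y"
  shows "ipow Y g (k - 1) y = inv_into Y g (ipow Y g k y)"
proof -
  have "ipow Y g k y = g (ipow Y g (k - 1) y)" using ipow_step[OF assms, of "k-1"] by simp
  then show ?thesis using gi_facts(4)[OF assms(1) ipow_in[OF assms]] by simp
qed

lemma ipow_add:
  assumes "bij_betw g Y Y" "y \<in> Y"
  shows "ipow Y g a (ipow Y g b y) = ipow Y g (a + b) y"
proof (induction a rule: int_induct[where k=0])
  case base
  then show ?case by (simp add: ipow_def)
next
  case (step1 i)
  then show ?case using ipow_step[OF assms(1) ipow_in[OF assms]] ipow_step[OF assms]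
    by (metis add.commute add.left_commute)
next
  case (step2 i)
  then show ?case using ipow_stepm[OF assms(1) ipow_in[OF assms]] ipow_stepm[OF assms]
    by (metis add.commute add_diff_eq)
qed

lemma skew_pow:
  assumes "bij_betw g Y Y" "y \<in> Y"
  shows "(skew Y f g h ^^ n) (x, y) = ((f ^^ n) x, ipow Y g (hsum f h n x) y)"
proof (induction n)
  case 0
  then show ?case by (simp add: ipow_def hsum_def)
next
  case (Suc n)
  have "hsum f h (Suc n) x = h ((f ^^ n) x) + hsum f h n x"
    by (simp add: hsum_def)
  then show ?case using Suc ipow_add[OF assms]
    by (simp add: skew_def)
qed

lemma ret_le:
  assumes "bij_betw g Y Y" "y \<in> Y"
  shows "ret_time (skew Y f g h) supdist r (x, y) \<le> ext_ret_time f h r x"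
proof (cases "\<exists>n::nat. 1 \<le> n \<and> dist ((f ^^ n) x) x < r \<and> hsum f h n x = 0")
  case False
  then show ?thesis unfolding ext_ret_time_def by (simp only: if_False) simp
next
  case True
  define n where "n = (LEAST n::nat. 1 \<le> n \<and> dist ((f ^^ n) x) x < r \<and> hsum f h n x = 0)"
  have n: "1 \<le> n \<and> dist ((f ^^ n) x) x < r \<and> hsum f h n x = 0"
    unfolding n_def using True by (rule LeastI_ex)
  have P: "1 \<le> n \<and> supdist ((skew Y f g h ^^ n) (x, y)) (x, y) < r"
    using n skew_pow[OF assms, where f=f and h=h and n=n and x=x]
    by (simp add: supdist_def ipow_def)
  then have "(LEAST m::nat. 1 \<le> m \<and> supdist ((skew Y f g h ^^ m) (x, y)) (x, y) < r) \<le> n"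
    by (rule Least_le)
  then show ?thesis using P True unfolding ret_time_def ext_ret_time_def n_def[symmetric]
    by auto
qed

lemma ret_pos: "0 < ret_time T d r z"
proof (cases "\<exists>n::nat. 1 \<le> n \<and> d ((T ^^ n) z) z < r")
  case True
  then have "1 \<le> (LEAST n::nat. 1 \<le> n \<and> d ((T ^^ n) z) z < r)"
    by (metis (mono_tags, lifting) LeastI_ex)
  then show ?thesis using True by (simp add: ret_time_def)
qed (unfold ret_time_def, simp only: if_False, simp)

lemma elog_mono:
  assumes "0 < a" "a \<le> b"
  shows "elog a \<le> elog b"
  using assms by (cases a; cases b) (auto simp: elog_def)

theorem proposition2p1:
  fixes M :: "'a::metric_space measure" and N :: "'b::metric_space measure"
    and X :: "'a set" and Y :: "'b set"
    and f :: "'a \<Rightarrow> 'a" and g :: "'b \<Rightarrow> 'b" and h :: "'a \<Rightarrow> int"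
  assumes "prob_space M" and "prob_space N"
    and "sets M = sets (restrict_space borel X)" and "space M = X"
    and "sets N = sets (restrict_space borel Y)" and "space N = Y"
    and "compact (closure X)" and "compact (closure Y)"
    and "ergodic_mp M f" and "ergodic_mp N g"
    and "bij_betw g Y Y" and "inv_into Y g \<in> measurable N N"
    and "h \<in> measurable M (count_space UNIV)"
    and "integrable M (\<lambda>x. real_of_int (h x))"
    and "(\<integral>x. real_of_int (h x) \<partial>M) = 0"
  shows "AE x in M. \<forall>y \<in> Y.
           upper_rate (\<lambda>r. ret_time (skew Y f g h) supdist r (x, y))
             \<le> upper_rate (\<lambda>r. ext_ret_time f h r x)"
proof (rule AE_I2, intro ballI)
  fix x y assume y: "y \<in> Y"
  have ev: "eventually (\<lambda>r::real. 0 < r \<and> r < 1) (at_right 0)"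
    by (simp add: eventually_at_right_field) (auto intro: exI[of _ 1])
  show "upper_rate (\<lambda>r. ret_time (skew Y f g h) supdist r (x, y))
             \<le> upper_rate (\<lambda>r. ext_ret_time f h r x)"
    unfolding upper_rate_def
  proof (rule Limsup_mono, rule eventually_mono[OF ev])
    fix r :: real assume r: "0 < r \<and> r < 1"
    then have "0 < ereal (- ln r)" by simp
    moreover have "elog (ret_time (skew Y f g h) supdist r (x, y)) \<le> elog (ext_ret_time f h r x)"
      by (rule elog_mono[OF ret_pos ret_le[OF assms(11) y]])
    ultimately show "elog (ret_time (skew Y f g h) supdist r (x, y)) / ereal (- ln r)
        \<le> elog (ext_ret_time f h r x) / ereal (- ln r)"
      by simp
  qed
qed

end
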